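(* Let $J\subset\mathbb{R}\setminus\{0\}$ be compact. Then there is a constant $C>0$ such that \[ \Big|\int_y^1e^{-i\varphi(x,\alpha)}dx\Big|\le C(1-y)^3 \] for all $y\in[0,1)$ and all $\alpha\in J$.
   Context: For $\alpha\in\mathbb{R}\setminus\{0\}$ and $y\in(-1,1)$, $\varphi(y,\alpha):=-\frac{2\alpha}{(1-y)^2}+\frac{2\alpha}{1-y}-\frac{2}{\alpha}\log(1-y)$. *)

theory Defs
  imports "HOL-Analysis.Analysis"
begin

definition phi :: "real \<Rightarrow> real \<Rightarrow> real" where
  "phi y \<alpha> = - 2 * \<alpha> / (1 - y)^2 + 2 * \<alpha> / (1 - y) - (2 / \<alpha>) * ln (1 - y)"

end

theory Submission
  imports Defs
begin

definition Dn :: "real \<Rightarrow> real \<Rightarrow> real" where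
  "Dn \<alpha> u = 4*\<alpha> - 2*\<alpha>*u - 2*u^2/\<alpha>"
definition hh :: "real \<Rightarrow> real \<Rightarrow> real" where
  "hh \<alpha> x = (- ((1-x)^3)) / Dn \<alpha> (1-x)"
definition dhh :: "real \<Rightarrow> real \<Rightarrow> real" where
  "dhh \<alpha> x = (3*(1-x)^2 * Dn \<alpha> (1-x) + (1-x)^3 * (2*\<alpha> + 4*(1-x)/\<alpha>)) / (Dn \<alpha> (1-x))^2"
definition dphi :: "real \<Rightarrow> real \<Rightarrow> real" where
  "dphi \<alpha> x = - Dn \<alpha> (1-x) / (1-x)^3"

lemma Dn_lower:
  assumes a: "0 < a" "a \<le> \<bar>\<alpha>\<bar>" and u: "0 \<le> u" "u \<le> 1/2" "u \<le> a/2"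
  shows "2*a \<le> \<bar>Dn \<alpha> u\<bar>"
proof -
  have al: "\<alpha> \<noteq> 0" using a by auto
  have 1: "\<bar>4*\<alpha> - 2*\<alpha>*u\<bar> = \<bar>\<alpha>\<bar>*(4-2*u)" using u
  proof -
    have "4*\<alpha> - 2*\<alpha>*u = \<alpha>*(4-2*u)" by (simp add: algebra_simps)
    then show ?thesis using u by (simp add: abs_mult)
  qed
  have "\<bar>\<alpha>\<bar>*(4-2*u) \<ge> \<bar>\<alpha>\<bar>*3" using u by (intro mult_left_mono) auto
  then have 2: "\<bar>4*\<alpha> - 2*\<alpha>*u\<bar> \<ge> 3*a" using 1 a by linarith
  have "\<bar>2*u^2/\<alpha>\<bar> = 2*u^2/\<bar>\<alpha>\<bar>" by (simp add: abs_mult)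
  also have "\<dots> \<le> 2*u^2/a" using a u by (intro divide_left_mono) auto
  also have "\<dots> \<le> a" proof -
    have "u^2 \<le> u * (a/2)" using mult_left_mono[of u "a/2" u] u by (simp add: power2_eq_square)
    also have "\<dots> \<le> (a/2)*(a/2)" using u a by (intro mult_right_mono) auto
    finally have "u^2 \<le> a/2*(a/2)" .
    moreover have "a/2*(a/2) = (a*a)/4" by simp
    ultimately have "2*u^2 \<le> a*a" using zero_le_power2[of u] by linarith
    then have "2*u^2/a \<le> a*a/a" using a by (intro divide_right_mono) auto
    then show ?thesis using a by simp
  qed
  finally have 3: "\<bar>2*u^2/\<alpha>\<bar> \<le> a" .
  have "\<bar>Dn \<alpha> u\<bar> \<ge> \<bar>4*\<alpha> - 2*\<alpha>*u\<bar> - \<bar>2*u^2/\<alpha>\<bar>" unfolding Dn_def by linarith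
  then show ?thesis using 2 3 by linarith
qed

lemma Dn_upper:
  assumes a: "0 < a" "a \<le> \<bar>\<alpha>\<bar>" "\<bar>\<alpha>\<bar> \<le> A" and u: "0 \<le> u" "u \<le> 1"
  shows "\<bar>Dn \<alpha> u\<bar> \<le> 6*A + 2/a"
proof -
  have "\<bar>\<alpha>\<bar>*u \<le> A*1" using a u by (intro mult_mono) auto
  then have "\<bar>2*\<alpha>*u\<bar> \<le> 2*A" using u by (simp add: abs_mult)
  moreover have "\<bar>2*u^2/\<alpha>\<bar> \<le> 2/a"
  proof -
    have "\<bar>2*u^2/\<alpha>\<bar> = 2*u^2/\<bar>\<alpha>\<bar>" by (simp add: abs_mult)
    also have "\<dots> \<le> 2/\<bar>\<alpha>\<bar>" using u a by (intro divide_right_mono) (auto simp: power_le_one)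
    also have "\<dots> \<le> 2/a" using a by (intro divide_left_mono) auto
    finally show ?thesis .
  qed
  moreover have "\<bar>4*\<alpha>\<bar> \<le> 4*A" using a by simp
  moreover have "\<bar>4*\<alpha> - 2*\<alpha>*u - 2*u^2/\<alpha>\<bar> \<le> \<bar>4*\<alpha>\<bar> + \<bar>2*\<alpha>*u\<bar> + \<bar>2*u^2/\<alpha>\<bar>"
    using abs_triangle_ineq4[of "4*\<alpha> - 2*\<alpha>*u" "2*u^2/\<alpha>"] abs_triangle_ineq4[of "4*\<alpha>" "2*\<alpha>*u"] by linarith
  ultimately show ?thesis unfolding Dn_def by linarith
qed

lemma aux3: "\<bar>d\<bar> \<le> X \<Longrightarrow> \<bar>q\<bar> \<le> Y \<Longrightarrow> \<bar>3*d + q\<bar> \<le> 3*X + (Y::real)"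
  by linarith

lemma dhh_bound:
  assumes a: "0 < a" "a \<le> \<bar>\<alpha>\<bar>" "\<bar>\<alpha>\<bar> \<le> A" and u: "0 \<le> 1-x" "1-x \<le> 1/2" "1-x \<le> a/2"
  shows "\<bar>dhh \<alpha> x\<bar> \<le> ((3*(6*A+2/a) + 2*A + 4/a)/(4*a^2)) * (1-x)^2"
proof -
  define u where "u = 1-x"
  have D1: "2*a \<le> \<bar>Dn \<alpha> u\<bar>" using Dn_lower[OF a(1,2)] u unfolding u_def by auto
  have D2: "\<bar>Dn \<alpha> u\<bar> \<le> 6*A + 2/a" using Dn_upper[OF a] u unfolding u_def by auto
  have t: "\<bar>2*\<alpha> + 4*u/\<alpha>\<bar> \<le> 2*A + 4/a"
  proof -
    have "\<bar>4*u/\<alpha>\<bar> = 4*u/\<bar>\<alpha>\<bar>" using u by (simp add: abs_mult u_def)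
    also have "\<dots> \<le> 4/\<bar>\<alpha>\<bar>" using u a by (intro divide_right_mono) (auto simp: u_def)
    also have "\<dots> \<le> 4/a" using a by (intro divide_left_mono) auto
    finally have "\<bar>4*u/\<alpha>\<bar> \<le> 4/a" .
    moreover have "\<bar>2*\<alpha>\<bar> \<le> 2*A" using a by simp
    moreover have "\<bar>2*\<alpha> + 4*u/\<alpha>\<bar> \<le> \<bar>2*\<alpha>\<bar> + \<bar>4*u/\<alpha>\<bar>" by (rule abs_triangle_ineq)
    ultimately show ?thesis by linarith
  qed
  have N: "\<bar>3 * Dn \<alpha> u + u * (2*\<alpha> + 4*u/\<alpha>)\<bar> \<le> 3*(6*A+2/a) + 2*A + 4/a"
  proof -
    have "\<bar>u * (2*\<alpha> + 4*u/\<alpha>)\<bar> \<le> 2*A + 4/a"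
    proof -
      have "u * \<bar>2*\<alpha> + 4*u/\<alpha>\<bar> \<le> 1 * (2*A + 4/a)" using t u unfolding u_def by (intro mult_mono) auto
      then show ?thesis using u by (simp add: abs_mult u_def)
    qed
    then show ?thesis using D2 aux3[of "Dn \<alpha> u" "6*A+2/a" "u * (2*\<alpha> + 4*u/\<alpha>)" "2*A+4/a"] by simp
  qed
  have eq: "dhh \<alpha> x = u^2 * ((3 * Dn \<alpha> u + u * (2*\<alpha> + 4*u/\<alpha>)) / (Dn \<alpha> u)^2)"
  proof -
    have "3*u^2 * Dn \<alpha> u + u^3 * (2*\<alpha> + 4*u/\<alpha>) = u^2 * (3 * Dn \<alpha> u + u * (2*\<alpha> + 4*u/\<alpha>))"
      by (simp add: algebra_simps power2_eq_square power3_eq_cube)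
    then show ?thesis unfolding dhh_def u_def[symmetric] by (metis times_divide_eq_right)
  qed
  have "\<bar>(3 * Dn \<alpha> u + u * (2*\<alpha> + 4*u/\<alpha>)) / (Dn \<alpha> u)^2\<bar> \<le> (3*(6*A+2/a) + 2*A + 4/a)/(4*a^2)"
  proof -
    have "(2*a)^2 \<le> (Dn \<alpha> u)^2" using D1 a
      by (metis abs_le_square_iff abs_of_pos mult_pos_pos zero_less_numeral)
    then have "4*a^2 \<le> (Dn \<alpha> u)^2" by (simp add: power_mult_distrib)
    then show ?thesis using N a
      by (simp add: abs_div) (intro frac_le, auto)
  qed
  then have "u^2 * \<bar>(3 * Dn \<alpha> u + u * (2*\<alpha> + 4*u/\<alpha>)) / (Dn \<alpha> u)^2\<bar> \<le> u^2 * ((3*(6*A+2/a) + 2*A + 4/a)/(4*a^2))"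
    by (intro mult_left_mono) auto
  moreover have "\<bar>dhh \<alpha> x\<bar> = u^2 * \<bar>(3 * Dn \<alpha> u + u * (2*\<alpha> + 4*u/\<alpha>)) / (Dn \<alpha> u)^2\<bar>"
    unfolding eq abs_mult by simp
  ultimately show ?thesis unfolding u_def[symmetric] by (simp add: mult.commute)
qed

lemma phi_deriv:
  assumes "x < 1" "\<alpha> \<noteq> 0"
  shows "((\<lambda>x. phi x \<alpha>) has_real_derivative dphi \<alpha> x) (at x)"
proof -
  have u: "1 - x \<noteq> 0" "1 - x > 0" using assms by auto
  have gen: "(0*t^2 - - 2*\<alpha>*(real 2*((0-1)*t^(2 - Suc 0))))/(t^2*t^2) + (0*t - 2*\<alpha>*(0-1))/(t*t) - (0*ln t + 1/t*(0-1)*(2/\<alpha>)) = - Dn \<alpha> t / t^3"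
    if "t \<noteq> 0" for t
    using that assms by (simp add: Dn_def field_simps power2_eq_square power3_eq_cube)
  show ?thesis unfolding phi_def[abs_def]
    apply (rule derivative_eq_intros refl | use u in simp; fail)+
    using gen[of "1-x"] u unfolding dphi_def by simp
qed

lemma hh_deriv:
  assumes "Dn \<alpha> (1-x) \<noteq> 0" "\<alpha> \<noteq> 0"
  shows "(hh \<alpha> has_real_derivative dhh \<alpha> x) (at x)"
proof -
  have d: "4 * \<alpha> - 2 * \<alpha> * (1 - x) - 2 * (1 - x)\<^sup>2 / \<alpha> \<noteq> 0" using assms(1) by (simp add: Dn_def)
  define D where "D = 4 * \<alpha> - 2 * \<alpha> * (1 - x) - 2 * (1 - x)\<^sup>2 / \<alpha>"
  show ?thesis unfolding hh_def[abs_def] Dn_def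
    apply (rule derivative_eq_intros refl | use d assms(2) in simp; fail)+
    unfolding dhh_def Dn_def
    using d assms(2)
    apply (simp only: D_def[symmetric])
    by (simp add: field_simps power2_eq_square power3_eq_cube)
qed

lemma key:
  assumes "x < 1" "Dn \<alpha> (1-x) \<noteq> 0"
  shows "dphi \<alpha> x * hh \<alpha> x = 1"
  using assms unfolding dphi_def hh_def by (simp add: field_simps)

lemma E_deriv:
  assumes "x < 1" "\<alpha> \<noteq> 0"
  shows "((\<lambda>x. exp (- \<i> * complex_of_real (phi x \<alpha>))) has_vector_derivative
           ((- \<i> * complex_of_real (dphi \<alpha> x)) * exp (- \<i> * complex_of_real (phi x \<alpha>)))) (at x)"
proof -
  have 1: "((\<lambda>x. - \<i> * complex_of_real (phi x \<alpha>)) has_vector_derivative (- \<i> * complex_of_real (dphi \<alpha> x))) (at x)"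
    by (intro has_vector_derivative_mult_right has_vector_derivative_of_real phi_deriv assms)
  have "((exp \<circ> (\<lambda>x. - \<i> * complex_of_real (phi x \<alpha>))) has_vector_derivative
           ((- \<i> * complex_of_real (dphi \<alpha> x)) * exp (- \<i> * complex_of_real (phi x \<alpha>)))) (at x)"
    by (rule field_vector_diff_chain_at[OF 1]) (rule DERIV_exp)
  then show ?thesis by (simp only: comp_def)
qed

lemma norm_E: "norm (exp (- \<i> * complex_of_real r)) = 1"
  by (simp add: norm_exp_eq_Re)

lemma poly_int:
  fixes K y :: real
  assumes "y \<le> 1"
  shows "((\<lambda>x. K * (1-x)^2) has_integral (K * (1-y)^3/3)) {y..1}"
proof -
  have "((\<lambda>x. K * (1-x)^2) has_integral ((- K * (1-1)^3/3) - (- K * (1-y)^3/3))) {y..1}"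
  proof (rule fundamental_theorem_of_calculus)
    show "y \<le> 1" using assms by auto
    fix x :: real assume "x \<in> {y..1}"
    have "((\<lambda>x. - K * (1-x)^3/3) has_real_derivative K * (1-x)^2) (at x within {y..1})"
      by (auto intro!: derivative_eq_intros simp: power2_eq_square)
    then show "((\<lambda>x. - K * (1-x)^3/3) has_vector_derivative K * (1-x)^2) (at x within {y..1})"
      by (simp add: has_real_derivative_iff_has_vector_derivative)
  qed
  then show ?thesis by simp
qed

lemma main_small:
  fixes a A \<alpha> y :: real
  defines "K \<equiv> (3*(6*A+2/a) + 2*A + 4/a)/(4*a^2)"
  assumes a: "0 < a" "a \<le> \<bar>\<alpha>\<bar>" "\<bar>\<alpha>\<bar> \<le> A" and y: "0 \<le> y" "y < 1" "1-y \<le> 1/2" "1-y \<le> a/2"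
    and int: "(\<lambda>x. exp (- \<i> * complex_of_real (phi x \<alpha>))) integrable_on {y..1}"
  shows "norm (integral {y..1} (\<lambda>x. exp (- \<i> * complex_of_real (phi x \<alpha>)))) \<le> (1/(2*a) + K/3) * (1-y)^3"
proof -
  define E where "E = (\<lambda>x. exp (- \<i> * complex_of_real (phi x \<alpha>)))"
  define F where "F = (\<lambda>x. \<i> * complex_of_real (hh \<alpha> x) * E x)"
  define G where "G = (\<lambda>x. complex_of_real (dhh \<alpha> x) * E x)"
  define F' where "F' = (\<lambda>x. E x + \<i> * G x)"
  have al: "\<alpha> \<noteq> 0" using a by auto
  have Dlow: "2*a \<le> \<bar>Dn \<alpha> (1-x)\<bar>" if "x \<in> {y..1}" for x
    using Dn_lower[OF a(1,2), of "1-x"] that y by auto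
  have Dnz: "Dn \<alpha> (1-x) \<noteq> 0" if "x \<in> {y..1}" for x
    using Dlow[OF that] a by auto
  have hbound: "\<bar>hh \<alpha> x\<bar> \<le> (1-x)^3/(2*a)" if "x \<in> {y..1}" for x
  proof -
    have "\<bar>hh \<alpha> x\<bar> = (1-x)^3 / \<bar>Dn \<alpha> (1-x)\<bar>" using that unfolding hh_def by (simp add: abs_div)
    also have "\<dots> \<le> (1-x)^3/(2*a)" using that a Dlow[OF that] by (intro divide_left_mono) auto
    finally show ?thesis .
  qed
  have derF0: "(F has_vector_derivative F' x) (at x)" if "x < 1" "x \<in> {y..1}" for x
  proof -
    have x: "x < 1" "x \<in> {y..1}" using that by auto
    have h: "((\<lambda>x. complex_of_real (hh \<alpha> x)) has_vector_derivative complex_of_real (dhh \<alpha> x)) (at x)"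
      by (intro has_vector_derivative_of_real hh_deriv Dnz x al)
    have "(F has_vector_derivative (\<i> * (complex_of_real (hh \<alpha> x) * ((- \<i> * complex_of_real (dphi \<alpha> x)) * E x) + complex_of_real (dhh \<alpha> x) * E x))) (at x)"
      unfolding F_def E_def mult.assoc
      by (intro has_vector_derivative_mult_right has_vector_derivative_mult h E_deriv[unfolded mult.assoc] x al)
    moreover have "\<i> * (complex_of_real (hh \<alpha> x) * ((- \<i> * complex_of_real (dphi \<alpha> x)) * E x) + complex_of_real (dhh \<alpha> x) * E x) = F' x"
    proof -
      have k: "complex_of_real (dphi \<alpha> x) * complex_of_real (hh \<alpha> x) = 1"
        using key[OF x(1) Dnz[OF x(2)]] by (metis of_real_1 of_real_mult)
      show ?thesis unfolding F'_def G_def using k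
        by (simp add: algebra_simps)
    qed
    ultimately show ?thesis by simp
  qed
  have derF: "(F has_vector_derivative F' x) (at x)" if "x \<in> {y<..<1}" for x
    using derF0 that by auto
  have contF: "continuous_on {y..1} F"
    unfolding continuous_on_eq_continuous_within
  proof
    fix x assume x: "x \<in> {y..1}"
    show "continuous (at x within {y..1}) F"
    proof (cases "x < 1")
      case True
      have "(F has_vector_derivative F' x) (at x)" using derF0 True x by auto
      then show ?thesis
        by (rule continuous_at_imp_continuous_at_within[OF has_vector_derivative_continuous])
    next
      case False
      then have x1: "x = 1" using x by auto
      have F1: "F 1 = 0" unfolding F_def hh_def by simp
      have "(F \<longlongrightarrow> 0) (at 1 within {y..1})"
      proof (rule Lim_null_comparison)
        show "\<forall>\<^sub>F x in at 1 within {y..1}. norm (F x) \<le> (1-x)^3/(2*a)"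
          unfolding eventually_at_filter
          by (intro always_eventually) (auto simp: F_def E_def norm_mult norm_E hbound)
        have "((\<lambda>x. (1-x)^3/(2*a)) \<longlongrightarrow> (1-1)^3/(2*a)) (at 1 within {y..1})"
          using a by (intro tendsto_intros) auto
        then show "((\<lambda>x. (1-x)^3/(2*a)) \<longlongrightarrow> 0) (at 1 within {y..1})" by simp
      qed
      then show ?thesis unfolding x1 continuous_within F1 .
    qed
  qed
  have FTC: "(F' has_integral (F 1 - F y)) {y..1}"
    by (rule fundamental_theorem_of_calculus_interior) (use y contF derF in auto)
  have intG: "G integrable_on {y..1}"
  proof -
    have "(\<lambda>x. - \<i> * (F' x - E x)) integrable_on {y..1}"
      by (intro integrable_on_mult_right integrable_diff int[folded E_def] has_integral_integrable[OF FTC])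
    moreover have "(\<lambda>x. - \<i> * (F' x - E x)) = G" unfolding F'_def by (auto simp: fun_eq_iff algebra_simps)
    ultimately show ?thesis by simp
  qed
  have eqI: "integral {y..1} E = (F 1 - F y) - \<i> * integral {y..1} G"
  proof -
    have "E = (\<lambda>x. F' x - \<i> * G x)" unfolding F'_def by auto
    then have "integral {y..1} E = integral {y..1} F' - integral {y..1} (\<lambda>x. \<i> * G x)"
      using integral_diff[OF has_integral_integrable[OF FTC] integrable_on_mult_right[OF intG]] by simp
    also have "\<dots> = (F 1 - F y) - \<i> * integral {y..1} G"
      using integral_unique[OF FTC] integral_mult_right by simp
    finally show ?thesis .
  qed
  have Gb: "norm (integral {y..1} G) \<le> K * (1-y)^3 / 3"
  proof -
    have P: "((\<lambda>x. K * (1-x)^2) has_integral (K * (1-y)^3/3)) {y..1}"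
      using poly_int y by auto
    have "norm (integral {y..1} G) \<le> integral {y..1} (\<lambda>x. K * (1-x)^2)"
    proof (rule Henstock_Kurzweil_Integration.integral_norm_bound_integral[OF intG has_integral_integrable[OF P]])
      fix x assume x: "x \<in> {y..1}"
      show "norm (G x) \<le> K * (1-x)^2"
        unfolding G_def E_def norm_mult norm_E norm_of_real K_def mult_1_right
        using dhh_bound[OF a, of x] x y by auto
    qed
    also have "\<dots> = K * (1-y)^3 / 3" using integral_unique[OF P] by simp
    finally show ?thesis .
  qed
  have "norm (integral {y..1} E) \<le> norm (F 1) + norm (F y) + norm (integral {y..1} G)"
    unfolding eqI using norm_triangle_ineq4[of "F 1 - F y" "\<i> * integral {y..1} G"] norm_triangle_ineq4[of "F 1" "F y"]
    by (simp add: norm_mult)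
  also have "norm (F 1) = 0" unfolding F_def hh_def by simp
  also have "norm (F y) \<le> (1-y)^3/(2*a)"
    unfolding F_def E_def norm_mult norm_E using hbound[of y] y by simp
  finally have "norm (integral {y..1} E) \<le> (1-y)^3/(2*a) + K * (1-y)^3 / 3" using Gb by linarith
  then show ?thesis unfolding E_def by (simp add: algebra_simps)
qed

lemma main_large:
  fixes y \<delta> :: real
  assumes y: "y < 1" "\<delta> \<le> 1 - y" "0 < \<delta>"
  shows "norm (integral {y..1} (\<lambda>x. exp (- \<i> * complex_of_real (phi x \<alpha>)))) \<le> (1/\<delta>^2) * (1-y)^3"
proof (cases "(\<lambda>x. exp (- \<i> * complex_of_real (phi x \<alpha>))) integrable_on {y..1}")
  case False
  then show ?thesis using y by (simp add: not_integrable_integral)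
next
  case True
  have "norm (integral {y..1} (\<lambda>x. exp (- \<i> * complex_of_real (phi x \<alpha>)))) \<le> integral {y..1} (\<lambda>x. 1::real)"
    by (rule Henstock_Kurzweil_Integration.integral_norm_bound_integral[OF True]) (auto simp: norm_E)
  also have "\<dots> = 1 - y" using y by simp
  also have "\<dots> \<le> (1/\<delta>^2) * (1-y)^3"
  proof -
    have "\<delta>^2 \<le> (1-y)^2" using y by (intro power_mono) auto
    then have "(1-y) * \<delta>^2 \<le> (1-y) * (1-y)^2" using y by (intro mult_left_mono) auto
    then have "(1-y) * \<delta>^2 \<le> (1-y)^3" by (simp add: power2_eq_square power3_eq_cube)
    then show ?thesis using y by (simp add: field_simps)
  qed
  finally show ?thesis .
qed

theorem lemma3p33:
  fixes J :: "real set"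
  assumes "compact J" and "0 \<notin> J"
  shows "\<exists>C>0. \<forall>y\<in>{0..<1}. \<forall>\<alpha>\<in>J.
           norm (integral {y..1} (\<lambda>x. exp (- \<i> * complex_of_real (phi x \<alpha>)))) \<le> C * (1 - y) ^ 3"
proof -
  have "open (- J)" using assms(1) compact_imp_closed by blast
  then obtain a where a: "a > 0" "ball 0 a \<subseteq> - J" using assms(2) open_contains_ball by blast
  have aJ: "a \<le> \<bar>\<alpha>\<bar>" if "\<alpha> \<in> J" for \<alpha>
    using a that by (force simp: subset_iff)
  obtain A where A: "\<And>\<alpha>. \<alpha> \<in> J \<Longrightarrow> \<bar>\<alpha>\<bar> \<le> A"
    using compact_imp_bounded[OF assms(1)] by (auto simp: bounded_iff)
  define \<delta> where "\<delta> = min (1/2) (a/2)"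
  have dp: "\<delta> > 0" using a by (simp add: \<delta>_def)
  define K where "K = (3*(6*A+2/a) + 2*A + 4/a)/(4*a^2)"
  define C where "C = max (1/\<delta>^2) (1/(2*a) + K/3)"
  have Cp: "C > 0" using dp by (simp add: C_def less_max_iff_disj)
  show ?thesis
  proof (intro exI[of _ C] conjI Cp ballI)
    fix y \<alpha> :: real assume y: "y \<in> {0..<1}" and al: "\<alpha> \<in> J"
    show "norm (integral {y..1} (\<lambda>x. exp (- \<i> * complex_of_real (phi x \<alpha>)))) \<le> C * (1 - y) ^ 3"
    proof (cases "\<delta> \<le> 1 - y")
      case True
      have "norm (integral {y..1} (\<lambda>x. exp (- \<i> * complex_of_real (phi x \<alpha>)))) \<le> (1/\<delta>^2) * (1-y)^3"
        using main_large[of y \<delta>] True y dp by auto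
      also have "\<dots> \<le> C * (1-y)^3" using y by (intro mult_right_mono) (auto simp: C_def)
      finally show ?thesis .
    next
      case False
      show ?thesis
      proof (cases "(\<lambda>x. exp (- \<i> * complex_of_real (phi x \<alpha>))) integrable_on {y..1}")
        case nint: False
        then show ?thesis using y Cp by (simp add: not_integrable_integral)
      next
        case True
        have "norm (integral {y..1} (\<lambda>x. exp (- \<i> * complex_of_real (phi x \<alpha>)))) \<le> (1/(2*a) + K/3) * (1-y)^3"
          unfolding K_def
          by (rule main_small[OF a(1) aJ[OF al] A[OF al] _ _ _ _ True]) (use y False in \<open>auto simp: \<delta>_def\<close>)
        also have "\<dots> \<le> C * (1-y)^3" using y by (intro mult_right_mono) (auto simp: C_def)
        finally show ?thesis .
      qed
    qed
  qed
qed

end
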